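(* Let $d\ge1$, $n\ge3$, $u\in\mathbb{C}\setminus\{0\}$. The two-sided ideal of $\mathrm{Y}_{d,n}(u)$ generated by $r_{1,2},\ldots,r_{n-2,n-1}$ (the defining ideal of $\mathrm{FTL}_{d,n}(u)$) is generated by any single element $r_{i,i+1}$, $1\le i\le n-2$.
   Context: The Yokonuma–Hecke algebra $\mathrm{Y}_{d,n}(u)$ is the unital associative $\mathbb{C}$-algebra with generators $g_1,\ldots,g_{n-1},t_1,\ldots,t_n$ and relations: $g_ig_j=g_jg_i$ for $|i-j|>1$; $g_{i+1}g_ig_{i+1}=g_ig_{i+1}g_i$; $t_it_j=t_jt_i$; $t_i^d=1$; $g_it_i=t_{i+1}g_i$; $g_it_{i+1}=t_ig_i$; $g_it_j=t_jg_i$ for $j\ne i,i+1$; $g_i^2=1+(u-1)e_i+(u-1)e_ig_i$, where $e_i=\frac1d\sum_{s=0}^{d-1}t_i^st_{i+1}^{d-s}$. For $w\in S_n$ with reduced expression $s_{i_1}\cdots s_{i_k}$ put $g_w=g_{i_1}\cdots g_{i_k}$; $g_{i,i+1}=\sum_{w\in\langle s_i,s_{i+1}\rangle}g_w$ and $r_{i,i+1}=\sum_{a,b=0}^{d-1}t_i^{a}t_{i+1}^{b-a}t_{i+2}^{-b}\,g_{i,i+1}$. $\mathrm{FTL}_{d,n}(u)$ is the quotient of $\mathrm{Y}_{d,n}(u)$ by the two-sided ideal generated by all $r_{i,i+1}$. *)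

theory Defs
  imports Complex_Main
begin

text \<open>A unital associative complex algebra is modelled as a ring type 'a together with a
  unital ring homomorphism phi from the complex numbers into the centre of 'a.\<close>

definition central_scalars :: "(complex \<Rightarrow> 'a::ring_1) \<Rightarrow> bool" where
  "central_scalars phi \<longleftrightarrow>
     phi 1 = 1 \<and> (\<forall>a b. phi (a + b) = phi a + phi b) \<and> (\<forall>a b. phi (a * b) = phi a * phi b)
     \<and> (\<forall>c x. phi c * x = x * phi c)"

definition ideal_gen :: "'a::ring_1 set \<Rightarrow> 'a set" where
  "ideal_gen S = {y. \<exists>as ss bs. length as = length ss \<and> length bs = length ss \<and> set ss \<subseteq> S \<and>
       y = (\<Sum>k<length ss. as ! k * ss ! k * bs ! k)}"

definition yh_e :: "(complex \<Rightarrow> 'a::ring_1) \<Rightarrow> nat \<Rightarrow> (nat \<Rightarrow> 'a) \<Rightarrow> nat \<Rightarrow> 'a" where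
  "yh_e phi d t i = phi (1 / of_nat d) * (\<Sum>s<d. t i ^ s * t (Suc i) ^ (d - s))"

definition yh_rels :: "(complex \<Rightarrow> 'a::ring_1) \<Rightarrow> nat \<Rightarrow> nat \<Rightarrow> complex \<Rightarrow>
    (nat \<Rightarrow> 'a) \<Rightarrow> (nat \<Rightarrow> 'a) \<Rightarrow> bool" where
  "yh_rels phi d n u g t \<longleftrightarrow>
     (\<forall>i j. 1 \<le> i \<and> i \<le> n - 1 \<and> 1 \<le> j \<and> j \<le> n - 1 \<and> (i + 1 < j \<or> j + 1 < i)
        \<longrightarrow> g i * g j = g j * g i) \<and>
     (\<forall>i. 1 \<le> i \<and> i \<le> n - 2 \<longrightarrow> g (i+1) * g i * g (i+1) = g i * g (i+1) * g i) \<and>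
     (\<forall>i j. 1 \<le> i \<and> i \<le> n \<and> 1 \<le> j \<and> j \<le> n \<longrightarrow> t i * t j = t j * t i) \<and>
     (\<forall>i. 1 \<le> i \<and> i \<le> n \<longrightarrow> t i ^ d = 1) \<and>
     (\<forall>i. 1 \<le> i \<and> i \<le> n - 1 \<longrightarrow> g i * t i = t (i+1) * g i) \<and>
     (\<forall>i. 1 \<le> i \<and> i \<le> n - 1 \<longrightarrow> g i * t (i+1) = t i * g i) \<and>
     (\<forall>i j. 1 \<le> i \<and> i \<le> n - 1 \<and> 1 \<le> j \<and> j \<le> n \<and> j \<noteq> i \<and> j \<noteq> i + 1
        \<longrightarrow> g i * t j = t j * g i) \<and>
     (\<forall>i. 1 \<le> i \<and> i \<le> n - 1 \<longrightarrow>
        g i ^ 2 = 1 + phi (u - 1) * yh_e phi d t i + phi (u - 1) * yh_e phi d t i * g i)"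

text \<open>g_{i,i+1}: sum of g_w over w in the parabolic subgroup generated by s_i, s_{i+1}
  (reduced words: 1, s_i, s_{i+1}, s_i s_{i+1}, s_{i+1} s_i, s_i s_{i+1} s_i).\<close>
definition yh_gsum :: "(nat \<Rightarrow> 'a::ring_1) \<Rightarrow> nat \<Rightarrow> 'a" where
  "yh_gsum g i = 1 + g i + g (i+1) + g i * g (i+1) + g (i+1) * g i + g i * g (i+1) * g i"

text \<open>r_{i,i+1} = sum_{a,b=0}^{d-1} t_i^a t_{i+1}^{b-a} t_{i+2}^{-b} g_{i,i+1}; negative exponents
  are written via t^d = 1: t^{b-a} = t^{b+d-a}, t^{-b} = t^{d-b}.\<close>
definition yh_r :: "nat \<Rightarrow> (nat \<Rightarrow> 'a::ring_1) \<Rightarrow> (nat \<Rightarrow> 'a) \<Rightarrow> nat \<Rightarrow> 'a" where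
  "yh_r d g t i = (\<Sum>a<d. \<Sum>b<d. t i ^ a * t (i+1) ^ (b + d - a) * t (i+2) ^ (d - b)) * yh_gsum g i"

end

theory Submission
  imports Defs
begin

lemma sum_split_aux: "(\<Sum>k<m+p. f k) = (\<Sum>k<m. f k) + (\<Sum>k<p. f (m+k))" for f :: "nat \<Rightarrow> 'a::comm_monoid_add"
  by (induction p) (simp_all add: add.assoc)

lemma ig_zero: "0 \<in> ideal_gen S"
  unfolding ideal_gen_def by (rule CollectI, rule exI[of _ "[]"], rule exI[of _ "[]"], rule exI[of _ "[]"]) simp

lemma ig_gen: "s \<in> S \<Longrightarrow> a * s * b \<in> ideal_gen S"
  unfolding ideal_gen_def
  by (rule CollectI, rule exI[of _ "[a]"], rule exI[of _ "[s]"], rule exI[of _ "[b]"]) simp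

lemma ig_gen1: "s \<in> S \<Longrightarrow> s \<in> ideal_gen S"
  using ig_gen[of s S 1 1] by simp

lemma ig_add:
  assumes "x \<in> ideal_gen S" "y \<in> ideal_gen S" shows "x + y \<in> ideal_gen S"
proof -
  from assms(1) obtain as ss bs where A: "length as = length ss" "length bs = length ss" "set ss \<subseteq> S"
    "x = (\<Sum>k<length ss. as ! k * ss ! k * bs ! k)" unfolding ideal_gen_def by blast
  from assms(2) obtain as' ss' bs' where B: "length as' = length ss'" "length bs' = length ss'" "set ss' \<subseteq> S"
    "y = (\<Sum>k<length ss'. as' ! k * ss' ! k * bs' ! k)" unfolding ideal_gen_def by blast
  let ?f = "\<lambda>k. (as @ as') ! k * (ss @ ss') ! k * (bs @ bs') ! k"
  have "(\<Sum>k<length (ss @ ss'). ?f k) = (\<Sum>k<length ss. ?f k) + (\<Sum>k<length ss'. ?f (length ss + k))"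
    by (simp add: sum_split_aux)
  also have "(\<Sum>k<length ss. ?f k) = x" using A by (simp add: nth_append)
  also have "(\<Sum>k<length ss'. ?f (length ss + k)) = y" using A B by (simp add: nth_append)
  finally have "x + y = (\<Sum>k<length (ss @ ss'). ?f k)" by simp
  then show ?thesis unfolding ideal_gen_def using A B
    by (intro CollectI exI[of _ "as @ as'"] exI[of _ "ss @ ss'"] exI[of _ "bs @ bs'"]) auto
qed

lemma ig_mult:
  assumes "x \<in> ideal_gen S" shows "a * x * b \<in> ideal_gen S"
proof -
  from assms obtain as ss bs where A: "length as = length ss" "length bs = length ss" "set ss \<subseteq> S"
    "x = (\<Sum>k<length ss. as ! k * ss ! k * bs ! k)" unfolding ideal_gen_def by blast
  have "a * x * b = (\<Sum>k<length ss. (map ((*) a) as) ! k * ss ! k * (map (\<lambda>z. z * b) bs) ! k)"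
    using A by (simp add: sum_distrib_left sum_distrib_right mult.assoc)
  then show ?thesis unfolding ideal_gen_def using A
    by (intro CollectI exI[of _ "map ((*) a) as"] exI[of _ ss] exI[of _ "map (\<lambda>z. z * b) bs"]) auto
qed

lemma ig_sum: fixes m :: nat shows "(\<And>k. k < m \<Longrightarrow> f k \<in> ideal_gen S) \<Longrightarrow> (\<Sum>k<m. f k) \<in> ideal_gen S"
  by (induction m) (auto intro: ig_add ig_zero)

lemma ig_sub: assumes "S \<subseteq> ideal_gen T" shows "ideal_gen S \<subseteq> ideal_gen T"
proof
  fix y assume "y \<in> ideal_gen S"
  then obtain as ss bs where A: "length as = length ss" "length bs = length ss" "set ss \<subseteq> S"
    "y = (\<Sum>k<length ss. as ! k * ss ! k * bs ! k)" unfolding ideal_gen_def by blast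
  show "y \<in> ideal_gen T" unfolding A(4)
    by (rule ig_sum, rule ig_mult) (use A assms nth_mem in blast)+
qed

lemma pow_comm: fixes x y :: "'a::monoid_mult" assumes "x * y = y * x" shows "x ^ m * y ^ n = y ^ n * x ^ m"
proof -
  have 1: "x ^ m * y = y * x ^ m" by (rule power_commuting_commutes[OF assms])
  show ?thesis by (rule power_commuting_commutes[OF 1[symmetric], symmetric])
qed

lemma mult_pow_comm: fixes x y :: "'a::monoid_mult" assumes "x * y = y * x" shows "(x * y) ^ n = x ^ n * y ^ n"
proof (induction n)
  case (Suc n)
  have "(x * y) ^ Suc n = x * y * (x ^ n * y ^ n)" by (simp add: Suc mult.assoc)
  also have "\<dots> = x * (y * x ^ n) * y ^ n" by (simp add: mult.assoc)
  also have "y * x ^ n = x ^ n * y" using pow_comm[OF assms, of n 1] by simp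
  finally show ?case by (simp add: mult.assoc power_Suc2[of y] power_Suc[of x])
qed simp

lemma S_w: fixes a b :: "'a::monoid_mult" assumes "a * b = b * a" "b ^ d = 1" "s < d"
  shows "a ^ s * b ^ (d - s) = (a * b ^ (d - 1)) ^ s"
proof (cases "s = 0")
  case True then show ?thesis using assms by simp
next
  case False
  have c: "a * b ^ (d - 1) = b ^ (d - 1) * a" using pow_comm[OF assms(1), of 1 "d-1"] by simp
  have e: "(d - 1) * s = (d - s) + d * (s - 1)" using False assms(3)
    by (cases s) (auto simp: algebra_simps)
  have "(a * b ^ (d - 1)) ^ s = a ^ s * b ^ ((d - 1) * s)"
    by (simp only: mult_pow_comm[OF c] power_mult)
  also have "b ^ ((d - 1) * s) = b ^ (d - s)" unfolding e power_add power_mult assms(2) by simp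
  finally show ?thesis by simp
qed

lemma shift_sum: fixes w :: "'a::ring_1" assumes "w ^ d = 1"
  shows "w * (\<Sum>s<d. w ^ s) = (\<Sum>s<d. w ^ s)"
proof -
  have "w * (\<Sum>s<d. w ^ s) = (\<Sum>s<d. w ^ Suc s)" by (simp add: sum_distrib_left)
  also have "\<dots> + w ^ 0 = (\<Sum>s<Suc d. w ^ s)" by (simp only: sum.lessThan_Suc_shift add.commute)
  also have "\<dots> = (\<Sum>s<d. w ^ s) + w ^ d" by simp
  finally show ?thesis using assms by simp
qed

lemma pow_shift_sum: fixes w :: "'a::ring_1" assumes "w ^ d = 1"
  shows "w ^ k * (\<Sum>s<d. w ^ s) = (\<Sum>s<d. w ^ s)"
proof (induction k)
  case (Suc k)
  then show ?case using shift_sum[OF assms] by (simp add: mult.assoc)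
qed simp

lemma S_idem: fixes a b :: "'a::ring_1" assumes "a * b = b * a" "a ^ d = 1" "b ^ d = 1" "d \<ge> 1"
  shows "(\<Sum>s<d. a ^ s * b ^ (d - s)) * (\<Sum>s<d. a ^ s * b ^ (d - s)) = of_nat d * (\<Sum>s<d. a ^ s * b ^ (d - s))"
proof -
  define w where "w = a * b ^ (d - 1)"
  have S: "(\<Sum>s<d. a ^ s * b ^ (d - s)) = (\<Sum>s<d. w ^ s)"
    unfolding w_def by (rule sum.cong) (use S_w[OF assms(1,3)] in auto)
  have c: "a * b ^ (d - 1) = b ^ (d - 1) * a" using pow_comm[OF assms(1), of 1 "d-1"] by simp
  have "(b ^ (d - 1)) ^ d = (b ^ d) ^ (d - 1)"
    by (simp only: power_mult[symmetric] mult.commute)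
  then have wd: "w ^ d = 1" unfolding w_def mult_pow_comm[OF c] using assms by simp
  have "(\<Sum>s<d. w ^ s) * (\<Sum>s<d. w ^ s) = (\<Sum>k<d. w ^ k * (\<Sum>s<d. w ^ s))"
    by (simp add: sum_distrib_right)
  also have "\<dots> = (\<Sum>k<d. (\<Sum>s<d. w ^ s))" using pow_shift_sum[OF wd] by simp
  also have "\<dots> = of_nat d * (\<Sum>s<d. w ^ s)" by simp
  finally show ?thesis unfolding S .
qed

lemma S_swap: fixes a b :: "'a::ring_1" assumes "a * b = b * a" "a ^ d = 1" "b ^ d = 1" "d \<ge> 1"
  shows "(\<Sum>s<d. b ^ s * a ^ (d - s)) = (\<Sum>s<d. a ^ s * b ^ (d - s))"
proof -
  obtain m where d: "d = Suc m" using assms(4) by (cases d) auto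
  have "(\<Sum>s<d. a ^ s * b ^ (d - s)) = (\<Sum>i<d. a ^ (d - Suc i) * b ^ (d - (d - Suc i)))"
    by (rule sum.nat_diff_reindex[symmetric])
  also have "\<dots> = (\<Sum>i<Suc m. a ^ (m - i) * b ^ (Suc i))"
    unfolding d by (rule sum.cong) auto
  also have "\<dots> = (\<Sum>i<m. a ^ (m - i) * b ^ (Suc i)) + 1"
    using assms(3) d by simp
  finally have L: "(\<Sum>s<d. a ^ s * b ^ (d - s)) = (\<Sum>i<m. a ^ (m - i) * b ^ (Suc i)) + 1" .
  have "(\<Sum>s<d. b ^ s * a ^ (d - s)) = (\<Sum>s<d. a ^ (d - s) * b ^ s)"
    by (rule sum.cong[OF refl], rule pow_comm[OF assms(1)[symmetric]])
  also have "\<dots> = a ^ (Suc m) + (\<Sum>i<m. a ^ (Suc m - Suc i) * b ^ (Suc i))"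
    unfolding d by (simp only: sum.lessThan_Suc_shift) simp
  also have "\<dots> = (\<Sum>i<m. a ^ (m - i) * b ^ (Suc i)) + 1" using assms(2) d by (simp add: add.commute)
  finally show ?thesis using L by simp
qed

lemma tw_pow: fixes x p q :: "'a::monoid_mult" assumes "x * p = q * x" shows "x * p ^ k = q ^ k * x"
proof (induction k)
  case (Suc k)
  have "x * p ^ Suc k = x * p * p ^ k" by (simp add: mult.assoc)
  also have "\<dots> = q * (x * p ^ k)" by (simp add: assms mult.assoc)
  also have "\<dots> = q ^ Suc k * x" by (simp add: Suc mult.assoc)
  finally show ?case .
qed simp

lemma tw_mult: fixes x :: "'a::monoid_mult" assumes "x * p = p' * x" "x * q = q' * x"
  shows "x * (p * q) = (p' * q') * x"
proof -
  have "x * (p * q) = (x * p) * q" by (simp add: mult.assoc)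
  also have "\<dots> = p' * (x * q)" by (simp add: assms mult.assoc)
  also have "\<dots> = (p' * q') * x" by (simp add: assms mult.assoc)
  finally show ?thesis .
qed

lemma tw_add: fixes x :: "'a::ring_1" assumes "x * p = p' * x" "x * q = q' * x"
  shows "x * (p + q) = (p' + q') * x"
  by (simp add: assms distrib_left distrib_right)

lemma tw_sum: fixes x :: "'a::ring_1" assumes "\<And>k. k \<in> A \<Longrightarrow> x * f k = f' k * x"
  shows "x * sum f A = sum f' A * x"
  by (simp add: sum_distrib_left sum_distrib_right assms)

lemma inv_abs: fixes e g C D :: "'a::ring_1"
  assumes ee: "e * e = e" and eg: "e * g = g * e" and g2: "g ^ 2 = 1 + C * e + C * e * g"
    and Cc: "\<And>x. C * x = x * C" and Dc: "\<And>x. D * x = x * D" and CD: "C + D + C * D = 0"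
  shows "g * ((g - C * e) * (1 + D * e)) = 1 \<and> ((g - C * e) * (1 + D * e)) * g = 1"
proof -
  have P: "(1 + C * e) * (1 + D * e) = 1"
  proof -
    have X: "C * e * (D * e) = C * D * e"
    proof -
      have "C * e * (D * e) = C * (e * D) * e" by (simp only: mult.assoc)
      also have "\<dots> = C * (D * e) * e" by (simp only: Dc[of e])
      also have "\<dots> = C * D * (e * e)" by (simp only: mult.assoc)
      finally show ?thesis by (simp only: ee)
    qed
    have "(1 + C * e) * (1 + D * e) = 1 + D * e + C * e + C * e * (D * e)"
      by (simp only: distrib_left distrib_right mult_1_left mult_1_right add_ac)
    also have "\<dots> = 1 + (C + D + C * D) * e" by (simp only: X distrib_right add_ac)
    finally show ?thesis using CD by simp
  qed
  have g2': "g * g = 1 + C * e + C * e * g" using g2 by (simp add: power2_eq_square)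
  have A: "g * (g - C * e) = 1 + C * e"
  proof -
    have "g * (C * e) = C * e * g"
    proof -
      have "g * (C * e) = (g * C) * e" by (simp add: mult.assoc)
      also have "\<dots> = C * (g * e)" by (simp only: mult.assoc[symmetric] Cc[of g])
      also have "\<dots> = C * e * g" by (simp add: eg mult.assoc)
      finally show ?thesis .
    qed
    then show ?thesis by (simp add: right_diff_distrib g2')
  qed
  have B: "(g - C * e) * g = 1 + C * e" by (simp add: left_diff_distrib g2' mult.assoc)
  have "g * ((g - C * e) * (1 + D * e)) = 1" using A P by (simp add: mult.assoc[symmetric])
  moreover have "((g - C * e) * (1 + D * e)) * g = 1"
  proof -
    have "(1 + D * e) * g = g * (1 + D * e)"
    proof -
      have "D * e * g = D * (g * e)" by (simp add: mult.assoc eg)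
      also have "\<dots> = g * (D * e)" by (simp add: mult.assoc[symmetric] Dc[of g])
      finally show ?thesis by (simp add: distrib_left distrib_right)
    qed
    then have "((g - C * e) * (1 + D * e)) * g = (g - C * e) * g * (1 + D * e)" by (simp add: mult.assoc)
    then show ?thesis using B P by simp
  qed
  ultimately show ?thesis by blast
qed

lemma cs_zero: assumes "central_scalars phi" shows "phi 0 = 0"
proof -
  have "phi (0 + 0) = phi 0 + phi 0" using assms unfolding central_scalars_def by blast
  then show ?thesis by simp
qed

lemma cs_nat: assumes "central_scalars phi" shows "phi (of_nat m) = of_nat m"
proof (induction m)
  case 0 then show ?case using cs_zero[OF assms] by simp
next
  case (Suc m)
  have "phi (1 + of_nat m) = phi 1 + phi (of_nat m)" using assms unfolding central_scalars_def by blast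
  moreover have "phi 1 = 1" using assms unfolding central_scalars_def by blast
  ultimately show ?case using Suc by (simp add: add.commute)
qed

lemma e_props:
  fixes phi :: "complex \<Rightarrow> 'a::ring_1"
  assumes cs: "central_scalars phi" and d: "d \<ge> 1"
    and ab: "t j * t (Suc j) = t (Suc j) * t j" and ad: "t j ^ d = 1" and bd: "t (Suc j) ^ d = 1"
    and ga: "gg * t j = t (Suc j) * gg" and gb: "gg * t (Suc j) = t j * gg"
  shows "yh_e phi d t j * yh_e phi d t j = yh_e phi d t j \<and> yh_e phi d t j * gg = gg * yh_e phi d t j"
proof -
  define S where "S = (\<Sum>s<d. t j ^ s * t (Suc j) ^ (d - s))"
  define c where "c = phi (1 / of_nat d)"
  have e: "yh_e phi d t j = c * S" unfolding yh_e_def S_def c_def by simp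
  have cc: "\<And>x. c * x = x * c" using cs unfolding central_scalars_def c_def by blast
  have pm: "\<And>a b. phi (a * b) = phi a * phi b" using cs unfolding central_scalars_def by blast
  have SS: "S * S = of_nat d * S" unfolding S_def by (rule S_idem[OF ab ad bd d])
  have "c * c * of_nat d = phi (1 / of_nat d * (1 / of_nat d) * of_nat d)"
    unfolding pm c_def cs_nat[OF cs] ..
  also have "1 / of_nat d * (1 / of_nat d) * of_nat d = (1 / of_nat d :: complex)" using d by simp
  finally have ccd: "c * c * of_nat d = c" unfolding c_def .
  have Sc: "S * c = c * S" by (rule cc[symmetric])
  have "c * S * (c * S) = c * (S * c) * S" by (simp only: mult.assoc)
  also have "\<dots> = c * (c * S) * S" by (simp only: Sc)
  also have "\<dots> = c * c * (S * S)" by (simp only: mult.assoc)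
  also have "\<dots> = c * c * of_nat d * S" by (simp add: SS mult.assoc)
  finally have E1: "c * S * (c * S) = c * S" using ccd by simp
  have gS: "gg * S = S * gg"
  proof -
    have "gg * S = (\<Sum>s<d. t (Suc j) ^ s * t j ^ (d - s)) * gg"
      unfolding S_def by (rule tw_sum, rule tw_mult, rule tw_pow[OF ga], rule tw_pow[OF gb])
    also have "(\<Sum>s<d. t (Suc j) ^ s * t j ^ (d - s)) = S" unfolding S_def by (rule S_swap[OF ab ad bd d])
    finally show ?thesis .
  qed
  have E2: "c * S * gg = gg * (c * S)"
  proof -
    have "c * S * gg = c * (gg * S)" by (simp add: mult.assoc gS)
    also have "\<dots> = gg * (c * S)" by (simp add: mult.assoc[symmetric] cc[of gg])
    finally show ?thesis .
  qed
  show ?thesis using E1 E2 e by simp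
qed

lemma g_inv:
  fixes phi :: "complex \<Rightarrow> 'a::ring_1"
  assumes cs: "central_scalars phi" and d: "d \<ge> 1" and u: "u \<noteq> 0"
    and R: "yh_rels phi d n u g t" and j: "1 \<le> j" "j \<le> n - 1"
  shows "\<exists>h. g j * h = 1 \<and> h * g j = 1"
proof -
  have tc: "\<And>i k. 1 \<le> i \<Longrightarrow> i \<le> n \<Longrightarrow> 1 \<le> k \<Longrightarrow> k \<le> n \<Longrightarrow> t i * t k = t k * t i"
    using R unfolding yh_rels_def by blast
  have ab: "t j * t (Suc j) = t (Suc j) * t j" using tc[of j "Suc j"] j by simp
  have ad: "t j ^ d = 1" using R j unfolding yh_rels_def by auto
  have bd: "t (Suc j) ^ d = 1" using R j unfolding yh_rels_def by auto
  have ga: "g j * t j = t (Suc j) * g j" using R j unfolding yh_rels_def by auto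
  have gb: "g j * t (Suc j) = t j * g j" using R j unfolding yh_rels_def by auto
  have g2: "g j ^ 2 = 1 + phi (u - 1) * yh_e phi d t j + phi (u - 1) * yh_e phi d t j * g j"
    using R j unfolding yh_rels_def by auto
  note E = e_props[OF cs d ab ad bd ga gb]
  have Cc: "\<And>x. phi (u - 1) * x = x * phi (u - 1)" using cs unfolding central_scalars_def by blast
  have Dc: "\<And>x. phi (1 / u - 1) * x = x * phi (1 / u - 1)" using cs unfolding central_scalars_def by blast
  have pa: "\<And>a b. phi (a + b) = phi a + phi b" and pm: "\<And>a b. phi (a * b) = phi a * phi b"
    using cs unfolding central_scalars_def by blast+
  have "(u - 1) + (1 / u - 1) + (u - 1) * (1 / u - 1) = 0" using u by (simp add: field_simps)
  then have "phi ((u - 1) + (1 / u - 1) + (u - 1) * (1 / u - 1)) = 0" using cs_zero[OF cs] by simp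
  then have CD: "phi (u - 1) + phi (1 / u - 1) + phi (u - 1) * phi (1 / u - 1) = 0"
    unfolding pa pm .
  show ?thesis
    using inv_abs[OF E[THEN conjunct1] E[THEN conjunct2] g2 Cc Dc CD] by blast
qed

lemma inv_mult: fixes x y :: "'a::monoid_mult"
  assumes "x * hx = 1" "hx * x = 1" "y * hy = 1" "hy * y = 1"
  shows "(x * y) * (hy * hx) = 1 \<and> (hy * hx) * (x * y) = 1"
proof -
  have "(x * y) * (hy * hx) = x * (y * hy) * hx" by (simp add: mult.assoc)
  moreover have "(hy * hx) * (x * y) = hy * (hx * x) * y" by (simp add: mult.assoc)
  ultimately show ?thesis using assms by simp
qed

lemma conj_step:
  fixes phi :: "complex \<Rightarrow> 'a::ring_1"
  assumes R: "yh_rels phi d n u g t" and j: "1 \<le> j" "j + 3 \<le> n"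
  shows "(g j * g (j+1) * g (j+2)) * yh_r d g t j = yh_r d g t (j+1) * (g j * g (j+1) * g (j+2))"
proof -
  define x where "x = g j * g (j+1) * g (j+2)"
  have r1: "g (j+2) * t j = t j * g (j+2)" "g (j+1) * t j = t j * g (j+1)" "g j * t j = t (j+1) * g j"
    using R j unfolding yh_rels_def by auto
  have r2: "g (j+2) * t (j+1) = t (j+1) * g (j+2)" "g (j+1) * t (j+1) = t (j+2) * g (j+1)"
     "g j * t (j+2) = t (j+2) * g j"
    using R j unfolding yh_rels_def by auto
  have r3: "g (j+2) * t (j+2) = t (j+3) * g (j+2)" "g (j+1) * t (j+3) = t (j+3) * g (j+1)"
     "g j * t (j+3) = t (j+3) * g j"
    using R j unfolding yh_rels_def by (auto simp: numeral_3_eq_3)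
  have r4: "g (j+2) * g j = g j * g (j+2)" "g (j+1) * g j * g (j+1) = g j * g (j+1) * g j"
     "g (j+2) * g (j+1) * g (j+2) = g (j+1) * g (j+2) * g (j+1)"
  proof -
    have gc: "\<And>i k. 1 \<le> i \<Longrightarrow> i \<le> n - 1 \<Longrightarrow> 1 \<le> k \<Longrightarrow> k \<le> n - 1 \<Longrightarrow> i + 1 < k \<Longrightarrow> g i * g k = g k * g i"
      using R unfolding yh_rels_def by blast
    have br: "\<And>i. 1 \<le> i \<Longrightarrow> i \<le> n - 2 \<Longrightarrow> g (i+1) * g i * g (i+1) = g i * g (i+1) * g i"
      using R unfolding yh_rels_def by blast
    show "g (j+2) * g j = g j * g (j+2)" using gc[of j "j+2"] j by simp
    show "g (j+1) * g j * g (j+1) = g j * g (j+1) * g j" using br[of j] j by simp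
    show "g (j+2) * g (j+1) * g (j+2) = g (j+1) * g (j+2) * g (j+1)" using br[of "j+1"] j by simp
  qed
  have X1: "x * t j = t (j+1) * x"
  proof -
    have "x * t j = g j * g (j+1) * (g (j+2) * t j)" unfolding x_def by (simp only: mult.assoc)
    also have "\<dots> = g j * (g (j+1) * t j) * g (j+2)" by (simp only: r1(1) mult.assoc)
    also have "\<dots> = (g j * t j) * g (j+1) * g (j+2)" by (simp only: r1(2) mult.assoc)
    also have "\<dots> = t (j+1) * x" by (simp only: r1(3) x_def mult.assoc)
    finally show ?thesis .
  qed
  have X2: "x * t (j+1) = t (j+2) * x"
  proof -
    have "x * t (j+1) = g j * g (j+1) * (g (j+2) * t (j+1))" unfolding x_def by (simp only: mult.assoc)
    also have "\<dots> = g j * (g (j+1) * t (j+1)) * g (j+2)" by (simp only: r2(1) mult.assoc)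
    also have "\<dots> = (g j * t (j+2)) * g (j+1) * g (j+2)" by (simp only: r2(2) mult.assoc)
    also have "\<dots> = t (j+2) * x" by (simp only: r2(3) x_def mult.assoc)
    finally show ?thesis .
  qed
  have X3: "x * t (j+2) = t (j+3) * x"
  proof -
    have "x * t (j+2) = g j * g (j+1) * (g (j+2) * t (j+2))" unfolding x_def by (simp only: mult.assoc)
    also have "\<dots> = g j * (g (j+1) * t (j+3)) * g (j+2)" by (simp only: r3(1) mult.assoc)
    also have "\<dots> = (g j * t (j+3)) * g (j+1) * g (j+2)" by (simp only: r3(2) mult.assoc)
    also have "\<dots> = t (j+3) * x" by (simp only: r3(3) x_def mult.assoc)
    finally show ?thesis .
  qed
  have X4: "x * g j = g (j+1) * x"
  proof -
    have "x * g j = g j * g (j+1) * (g (j+2) * g j)" unfolding x_def by (simp only: mult.assoc)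
    also have "\<dots> = (g j * g (j+1) * g j) * g (j+2)" by (simp only: r4(1) mult.assoc)
    also have "\<dots> = (g (j+1) * g j * g (j+1)) * g (j+2)" by (simp only: r4(2))
    also have "\<dots> = g (j+1) * x" by (simp only: x_def mult.assoc)
    finally show ?thesis .
  qed
  have X5: "x * g (j+1) = g (j+2) * x"
  proof -
    have "x * g (j+1) = g j * (g (j+1) * g (j+2) * g (j+1))" unfolding x_def by (simp only: mult.assoc)
    also have "\<dots> = g j * (g (j+2) * g (j+1) * g (j+2))" by (simp only: r4(3))
    also have "\<dots> = (g j * g (j+2)) * g (j+1) * g (j+2)" by (simp only: mult.assoc)
    also have "\<dots> = (g (j+2) * g j) * g (j+1) * g (j+2)" by (simp only: r4(1))
    also have "\<dots> = g (j+2) * x" by (simp only: x_def mult.assoc)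
    finally show ?thesis .
  qed
  have X0: "x * 1 = 1 * x" by simp
  have T: "x * (\<Sum>a<d. \<Sum>b<d. t j ^ a * t (j+1) ^ (b + d - a) * t (j+2) ^ (d - b))
      = (\<Sum>a<d. \<Sum>b<d. t (j+1) ^ a * t (j+1+1) ^ (b + d - a) * t (j+1+2) ^ (d - b)) * x"
    by (intro tw_sum tw_mult tw_pow) (simp_all add: X1[simplified] X2[simplified] X3[simplified] numeral_3_eq_3)
  have G: "x * yh_gsum g j = yh_gsum g (j+1) * x"
    unfolding yh_gsum_def
    by (intro tw_add tw_mult X0) (simp_all add: X4[simplified] X5[simplified])
  show ?thesis unfolding x_def[symmetric] yh_r_def
    by (rule tw_mult[OF T G])
qed

lemma ideal_step:
  fixes phi :: "complex \<Rightarrow> 'a::ring_1"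
  assumes cs: "central_scalars phi" and d: "d \<ge> 1" and u: "u \<noteq> 0"
    and R: "yh_rels phi d n u g t" and j: "1 \<le> j" "j + 3 \<le> n"
  shows "yh_r d g t (j+1) \<in> ideal_gen {yh_r d g t j} \<and> yh_r d g t j \<in> ideal_gen {yh_r d g t (j+1)}"
proof -
  have "\<exists>h. g j * h = 1 \<and> h * g j = 1" by (rule g_inv[OF cs d u R]) (use j in simp_all)
  then obtain h0 where h0: "g j * h0 = 1" "h0 * g j = 1" by blast
  have "\<exists>h. g (j+1) * h = 1 \<and> h * g (j+1) = 1" by (rule g_inv[OF cs d u R]) (use j in simp_all)
  then obtain h1 where h1: "g (j+1) * h1 = 1" "h1 * g (j+1) = 1" by blast
  have "\<exists>h. g (j+2) * h = 1 \<and> h * g (j+2) = 1" by (rule g_inv[OF cs d u R]) (use j in simp_all)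
  then obtain h2 where h2: "g (j+2) * h2 = 1" "h2 * g (j+2) = 1" by blast
  define x where "x = g j * g (j+1) * g (j+2)"
  define h where "h = h2 * (h1 * h0)"
  have I1: "(g j * g (j+1)) * (h1 * h0) = 1 \<and> (h1 * h0) * (g j * g (j+1)) = 1"
    by (rule inv_mult[OF h0 h1])
  have I2: "x * h = 1 \<and> h * x = 1" unfolding x_def h_def
    by (rule inv_mult[OF I1[THEN conjunct1] I1[THEN conjunct2] h2])
  have C: "x * yh_r d g t j = yh_r d g t (j+1) * x" unfolding x_def by (rule conj_step[OF R j])
  have "yh_r d g t (j+1) = yh_r d g t (j+1) * x * h" using I2 by (simp add: mult.assoc)
  also have "\<dots> = x * yh_r d g t j * h" by (simp add: C)
  finally have A: "yh_r d g t (j+1) \<in> ideal_gen {yh_r d g t j}" by (simp add: ig_gen)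
  have "yh_r d g t j = h * x * yh_r d g t j" using I2 by simp
  also have "\<dots> = h * yh_r d g t (j+1) * x" by (simp add: C mult.assoc)
  finally have B: "yh_r d g t j \<in> ideal_gen {yh_r d g t (j+1)}" by (simp add: ig_gen)
  show ?thesis using A B by blast
qed

theorem theorem4:
  fixes phi :: "complex \<Rightarrow> 'a::ring_1" and g t :: "nat \<Rightarrow> 'a" and d n i :: nat and u :: complex
  assumes "central_scalars phi"
    and "d \<ge> 1" and "n \<ge> 3" and "u \<noteq> 0"
    and "yh_rels phi d n u g t"
    and "1 \<le> i" and "i \<le> n - 2"
  shows "ideal_gen {yh_r d g t j | j. 1 \<le> j \<and> j \<le> n - 2} = ideal_gen {yh_r d g t i}"
proof -
  let ?R = "yh_r d g t"
  let ?I = "ideal_gen {?R i}"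
  note st = ideal_step[OF assms(1,2,4,5)]
  have up: "i + k \<le> n - 2 \<Longrightarrow> ?R (i + k) \<in> ?I" for k
  proof (induction k)
    case 0 then show ?case by (simp add: ig_gen1)
  next
    case (Suc k)
    then have "?R (i + k) \<in> ?I" by simp
    then have sub: "ideal_gen {?R (i + k)} \<subseteq> ?I" by (intro ig_sub) simp
    have "?R (i + k + 1) \<in> ideal_gen {?R (i + k)}" using st[of "i + k"] Suc.prems assms(6) by simp
    then show ?case using sub by auto
  qed
  have down: "k < i \<Longrightarrow> ?R (i - k) \<in> ?I" for k
  proof (induction k)
    case 0 then show ?case by (simp add: ig_gen1)
  next
    case (Suc k)
    then have "?R (i - k) \<in> ?I" by simp
    then have sub: "ideal_gen {?R (i - k)} \<subseteq> ?I" by (intro ig_sub) simp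
    have e: "i - Suc k + 1 = i - k" using Suc.prems by simp
    have "?R (i - Suc k) \<in> ideal_gen {?R (i - Suc k + 1)}"
      using st[of "i - Suc k"] Suc.prems assms(7,3) by simp
    then show ?case using sub e by auto
  qed
  have all: "?R j \<in> ?I" if "1 \<le> j" "j \<le> n - 2" for j
  proof (cases "i \<le> j")
    case True then show ?thesis using up[of "j - i"] that by simp
  next
    case False then show ?thesis using down[of "i - j"] that by simp
  qed
  show ?thesis
  proof
    show "ideal_gen {?R j | j. 1 \<le> j \<and> j \<le> n - 2} \<subseteq> ?I"
      by (rule ig_sub) (use all in blast)
    show "?I \<subseteq> ideal_gen {?R j | j. 1 \<le> j \<and> j \<le> n - 2}"
      by (rule ig_sub) (use assms(6,7) in \<open>auto intro!: ig_gen1\<close>)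
  qed
qed

end
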